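(* Let $k\ge2$, $n\ge1$, and $A=\{0<1<\cdots<k-1\}$. Let $G\subseteq A^{k}$ be the set of the $k!$ words of length $k$ in which each letter of $A$ occurs exactly once, and let $\Gamma_{k,n}=G^{k^{n-1}}$ (the set of concatenations of $k^{n-1}$ words of $G$, repetitions allowed). Then the set of words $BW(M)$, as $M$ ranges over all de Bruijn sets of span $n$ over $A$, is exactly $\Gamma_{k,n}$.
   Context: A word is primitive if it is not a proper power of another word; a necklace is the set of conjugates ($xy\sim yx$) of a primitive word, its length being the common length of its words. A multiset $M=\{n_{1},\dots,n_{t}\}$ of necklaces is a de Bruijn set of span $n$ over $A$ if $|n_{1}|+\cdots+|n_{t}|=k^{n}$ and every word of $A^{n}$ is a prefix of some power of some word belonging to one of the $n_{i}$. Burrows–Wheeler map: with $l$ the lcm of the lengths of the necklaces in $M$, sort lexicographically the list of all words $v^{l/|v|}$, $v$ ranging over the words of each necklace of $M$ (with multiplicity); $BW(M)$ is the word formed by the last letters of these words, in this order. *)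

theory Defs
  imports Main "HOL-Library.Multiset" "HOL-Library.List_Lexorder"
begin

text \<open>Words over the alphabet A = {0 < 1 < ... < k-1} are lists of naturals with letters < k.
  Lists are ordered lexicographically (List_Lexorder).\<close>

definition word_over :: "nat \<Rightarrow> nat list \<Rightarrow> bool" where
  "word_over k w \<longleftrightarrow> set w \<subseteq> {0..<k}"

definition power_word :: "nat list \<Rightarrow> nat \<Rightarrow> nat list" where
  "power_word u m = concat (replicate m u)"

text \<open>primitive: not a proper power of another word (the empty word is a power of itself).\<close>
definition primitive :: "nat list \<Rightarrow> bool" where
  "primitive w \<longleftrightarrow> w \<noteq> [] \<and> \<not> (\<exists>u m. m \<ge> 2 \<and> w = power_word u m)"

definition conjugates :: "nat list \<Rightarrow> nat list set" where
  "conjugates w = {rotate i w | i. i < length w}"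

definition is_necklace :: "nat \<Rightarrow> nat list set \<Rightarrow> bool" where
  "is_necklace k N \<longleftrightarrow> (\<exists>w. primitive w \<and> word_over k w \<and> N = conjugates w)"

definition neck_len :: "nat list set \<Rightarrow> nat" where
  "neck_len N = length (SOME w. w \<in> N)"

definition deBruijn_set :: "nat \<Rightarrow> nat \<Rightarrow> nat list set multiset \<Rightarrow> bool" where
  "deBruijn_set k n M \<longleftrightarrow>
     (\<forall>N \<in># M. is_necklace k N) \<and>
     (\<Sum>N \<in># M. neck_len N) = k ^ n \<and>
     (\<forall>u. length u = n \<and> word_over k u \<longrightarrow>
        (\<exists>N \<in># M. \<exists>v \<in> N. \<exists>m. u = take (length u) (power_word v m) \<and> length u \<le> m * length v))"

definition BW :: "nat list set multiset \<Rightarrow> nat list" where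
  "BW M = (let l = Lcm (neck_len ` set_mset M);
               ws = image_mset (\<lambda>v. power_word v (l div length v)) (\<Sum>N \<in># M. mset_set N)
           in map last (sorted_list_of_multiset ws))"

definition G_set :: "nat \<Rightarrow> nat list set" where
  "G_set k = {w. length w = k \<and> (\<forall>a < k. count_list w a = 1)}"

definition Gamma :: "nat \<Rightarrow> nat \<Rightarrow> nat list set" where
  "Gamma k n = {concat ws | ws. length ws = k ^ (n - 1) \<and> (\<forall>w \<in> set ws. w \<in> G_set k)}"

end

theory Submission
  imports Defs
begin


definition cyc :: "nat list \<Rightarrow> nat \<Rightarrow> nat" where
  "cyc v t = v ! (t mod length v)"

definition keyn :: "nat \<Rightarrow> nat list \<Rightarrow> nat list" where
  "keyn n w = map (cyc w) [0..<n]"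

definition An :: "nat \<Rightarrow> nat \<Rightarrow> nat list set" where
  "An k n = {q. length q = n \<and> set q \<subseteq> {0..<k}}"

lemma power_word_Suc: "power_word v (Suc m) = v @ power_word v m"
  by (simp add: power_word_def)

lemma length_power_word[simp]: "length (power_word v m) = m * length v"
  by (induction m) (auto simp: power_word_Suc power_word_def)

lemma set_power_word: "set (power_word v m) \<subseteq> set v"
  by (auto simp: power_word_def)

lemma nth_power_word: "t < m * length v \<Longrightarrow> power_word v m ! t = cyc v t"
proof (induction m arbitrary: t)
  case 0 then show ?case by simp
next
  case (Suc m)
  show ?case
  proof (cases "t < length v")
    case True then show ?thesis by (simp add: power_word_Suc nth_append cyc_def)
  next
    case False
    then have "power_word v (Suc m) ! t = power_word v m ! (t - length v)"
      by (simp add: power_word_Suc nth_append)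
    also have "\<dots> = cyc v (t - length v)" using Suc False by auto
    also have "\<dots> = cyc v t" using False by (simp add: cyc_def mod_if le_mod_geq)
    finally show ?thesis .
  qed
qed

lemma cyc_power_word: "v \<noteq> [] \<Longrightarrow> m \<ge> 1 \<Longrightarrow> cyc (power_word v m) t = cyc v t"
proof -
  assume v: "v \<noteq> []" and m: "m \<ge> 1"
  have pos: "0 < m * length v" using v m by auto
  have "cyc (power_word v m) t = power_word v m ! (t mod (m * length v))"
    by (simp add: cyc_def)
  also have "\<dots> = cyc v (t mod (m * length v))"
    using pos by (intro nth_power_word) simp
  also have "\<dots> = cyc v t" by (simp add: cyc_def mod_mod_cancel)
  finally show ?thesis .
qed

lemma take_power_word: "n \<le> m * length v \<Longrightarrow> take n (power_word v m) = keyn n v"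
  by (intro nth_equalityI) (auto simp: keyn_def nth_power_word)

lemma cyc_rotate: "v \<noteq> [] \<Longrightarrow> cyc (rotate i v) t = cyc v (t + i)"
  by (simp add: cyc_def nth_rotate mod_add_right_eq add.commute)

lemma rotate_power_word: "rotate i (power_word v m) = power_word (rotate i v) m"
proof (cases "v = []")
  case True then show ?thesis by (simp add: power_word_def)
next
  case False
  show ?thesis
  proof (intro nth_equalityI)
    show "length (rotate i (power_word v m)) = length (power_word (rotate i v) m)" by simp
    fix t assume t: "t < length (rotate i (power_word v m))"
    then have t': "t < m * length v" by simp
    have pos: "0 < m * length v" using t' by linarith
    have "rotate i (power_word v m) ! t = power_word v m ! ((i + t) mod (m * length v))"
      using t' by (simp add: nth_rotate)
    also have "\<dots> = cyc v ((i + t) mod (m * length v))"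
      by (rule nth_power_word) (use pos in simp)
    also have "\<dots> = cyc v (t + i)" by (simp add: cyc_def mod_mod_cancel add.commute)
    also have "\<dots> = power_word (rotate i v) m ! t"
      using t' False by (simp add: nth_power_word cyc_rotate)
    finally show "rotate i (power_word v m) ! t = power_word (rotate i v) m ! t" .
  qed
qed

lemma cyc_mod: "cyc v (t mod length v) = cyc v t"
  by (simp add: cyc_def)

lemma cyc_add_len: "cyc v (t + length v) = cyc v t"
  by (simp add: cyc_def)

lemma cyc_in_set: "v \<noteq> [] \<Longrightarrow> cyc v t \<in> set v"
  by (simp add: cyc_def)

lemma conj_rotate: "v \<in> conjugates w \<Longrightarrow> rotate i v \<in> conjugates w"
proof -
  assume "v \<in> conjugates w"
  then obtain j where j: "j < length w" "v = rotate j w" by (auto simp: conjugates_def)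
  then have "rotate i v = rotate ((i + j) mod length w) w"
    by (simp add: rotate_rotate rotate_conv_mod[of "i+j"])
  moreover have "length w > 0" using j by linarith
  then have "(i + j) mod length w < length w" by simp
  ultimately show ?thesis by (auto simp: conjugates_def)
qed

lemma conj_length: "v \<in> conjugates w \<Longrightarrow> length v = length w"
  by (auto simp: conjugates_def)

lemma conj_set: "v \<in> conjugates w \<Longrightarrow> set v = set w"
  by (auto simp: conjugates_def)

lemma conj_self: "w \<noteq> [] \<Longrightarrow> w \<in> conjugates w"
  by (auto simp: conjugates_def intro!: exI[of _ 0])

lemma card_conj: "card (conjugates w) \<le> length w"
proof -
  have "conjugates w = (\<lambda>i. rotate i w) ` {..<length w}" by (auto simp: conjugates_def)
  then show ?thesis by (metis card_image_le card_lessThan finite_lessThan)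
qed

lemma finite_conj: "finite (conjugates w)"
proof -
  have "conjugates w = (\<lambda>i. rotate i w) ` {..<length w}" by (auto simp: conjugates_def)
  then show ?thesis by simp
qed

lemma conj_conj: "x \<in> conjugates w \<Longrightarrow> conjugates x = conjugates w"
proof -
  assume x: "x \<in> conjugates w"
  then obtain j where j: "j < length w" "x = rotate j w" by (auto simp: conjugates_def)
  show ?thesis
  proof
    show "conjugates x \<subseteq> conjugates w"
      using x by (auto simp: conjugates_def[of x] intro: conj_rotate)
    show "conjugates w \<subseteq> conjugates x"
    proof
      fix y assume "y \<in> conjugates w"
      then obtain i where i: "i < length w" "y = rotate i w" by (auto simp: conjugates_def)
      have "y = rotate (i + (length w - j)) x"
        using j i by (simp add: rotate_rotate) (metis rotate_conv_mod mod_add_self2)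
      then have "y = rotate ((i + (length w - j)) mod length x) x"
        by (metis rotate_conv_mod)
      moreover have "length x > 0" using j by (simp del: length_greater_0_conv)
      then have "(i + (length w - j)) mod length x < length x" by simp
      ultimately show "y \<in> conjugates x" by (auto simp: conjugates_def)
    qed
  qed
qed

lemma neck_len_conj: "w \<noteq> [] \<Longrightarrow> neck_len (conjugates w) = length w"
  unfolding neck_len_def by (metis conj_length conj_self someI_ex)



lemma lex_append_less: "length a = length b \<Longrightarrow> a < b \<Longrightarrow> a @ s < b @ (t::nat list)"
proof (induction a arbitrary: b)
  case Nil then show ?case by simp
next
  case (Cons x a)
  then obtain y b' where b: "b = y # b'" by (cases b) auto
  show ?case using Cons b by auto
qed

lemma lex_take_le: "length a = length b \<Longrightarrow> a < b \<Longrightarrow> take m (a @ s) \<le> take m (b @ (t::nat list))"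
proof (induction a arbitrary: b m)
  case Nil then show ?case by simp
next
  case (Cons x a)
  then obtain y b' where b: "b = y # b'" by (cases b) auto
  show ?case
  proof (cases m)
    case 0 then show ?thesis by simp
  next
    case (Suc m')
    show ?thesis using Cons b Suc by auto
  qed
qed

lemma snoc_less: "(b1::nat) < b2 \<Longrightarrow> x @ [b1] < x @ [b2]"
  by (induction x) auto

fun wl :: "nat \<Rightarrow> nat \<Rightarrow> nat list list" where
  "wl k 0 = [[]]"
| "wl k (Suc m) = concat (map (\<lambda>x. map (\<lambda>b. x @ [b]) [0..<k]) (wl k m))"

lemma set_wl: "set (wl k m) = An k m"
proof (induction m)
  case 0 then show ?case by (auto simp: An_def)
next
  case (Suc m)
  show ?case
  proof
    show "set (wl k (Suc m)) \<subseteq> An k (Suc m)" using Suc by (auto simp: An_def)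
    show "An k (Suc m) \<subseteq> set (wl k (Suc m))"
    proof
      fix q assume q: "q \<in> An k (Suc m)"
      then have "q \<noteq> []" by (auto simp: An_def)
      then obtain x b where xb: "q = x @ [b]" by (metis rev_exhaust)
      have "x \<in> An k m" "b < k" using q xb by (auto simp: An_def)
      then show "q \<in> set (wl k (Suc m))" using Suc xb by (auto intro!: bexI[of _ x])
    qed
  qed
qed

lemma length_wl: "length (wl k m) = k ^ m"
  by (induction m) (auto simp: length_concat comp_def sum_list_triv)

lemma sorted_wl: "sorted_wrt (<) (wl k m)"
proof (induction m)
  case 0 then show ?case by simp
next
  case (Suc m)
  have len: "\<forall>x\<in>set xs. length x = m \<Longrightarrow> sorted_wrt (<) xs \<Longrightarrow>
      sorted_wrt (<) (concat (map (\<lambda>x. map (\<lambda>b. x @ [b]) [0..<k]) xs))" for xs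
  proof (induction xs)
    case Nil then show ?case by simp
  next
    case (Cons x xs)
    have s1: "sorted_wrt (<) (map (\<lambda>b. x @ [b]) [0..<k])"
      by (auto simp: sorted_wrt_map intro: sorted_wrt_mono_rel[OF _ sorted_wrt_upt] snoc_less)
    have s3: "\<forall>u\<in>set (map (\<lambda>b. x @ [b]) [0..<k]). \<forall>v\<in>set (concat (map (\<lambda>x. map (\<lambda>b. x @ [b]) [0..<k]) xs)). u < v"
      using Cons.prems by (auto intro!: lex_append_less)
    show ?case using Cons s1 s3 by (simp add: sorted_wrt_append)
  qed
  have "\<forall>x\<in>set (wl k m). length x = m" using set_wl[of k m] by (auto simp: An_def)
  then show ?case using len Suc by simp
qed

lemma finite_An: "finite (An k n)"
  using finite_lists_length_eq[of "{0..<k}" n] by (simp add: An_def conj_commute)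

lemma card_An: "card (An k n) = k ^ n"
  using card_lists_length_eq[of "{0..<k}" n] by (simp add: An_def conj_commute)



definition lM :: "nat list set multiset \<Rightarrow> nat" where
  "lM M = Lcm (neck_len ` set_mset M)"

definition gM :: "nat list set multiset \<Rightarrow> nat list \<Rightarrow> nat list" where
  "gM M v = power_word v (lM M div length v)"

definition wsM :: "nat list set multiset \<Rightarrow> nat list multiset" where
  "wsM M = image_mset (gM M) (\<Sum>N \<in># M. mset_set N)"

definition WM :: "nat list set multiset \<Rightarrow> nat list set" where
  "WM M = set_mset (wsM M)"

lemma BW_eq: "BW M = map last (sorted_list_of_multiset (wsM M))"
  by (simp add: BW_def wsM_def gM_def[abs_def] lM_def Let_def)

lemma WM_iff: "(\<forall>N\<in>#M. finite N) \<Longrightarrow> w \<in> WM M \<longleftrightarrow> (\<exists>N\<in>#M. \<exists>v\<in>N. w = gM M v)"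
  by (auto simp: WM_def wsM_def)

lemma size_wsM: "size (wsM M) = (\<Sum>N\<in>#M. card N)"
  by (simp add: wsM_def multiset.map_comp comp_def)

lemma neck_ne: "is_necklace k N \<Longrightarrow> N \<noteq> {} \<and> finite N"
  unfolding is_necklace_def primitive_def using conj_self finite_conj by blast

lemma neck_facts:
  assumes "is_necklace k N" "v \<in> N"
  shows "v \<noteq> []" "set v \<subseteq> {0..<k}" "neck_len N = length v" "rotate i v \<in> N"
    "finite N" "card N \<le> neck_len N" "N \<noteq> {}"
proof -
  obtain w where w: "primitive w" "word_over k w" "N = conjugates w"
    using assms by (auto simp: is_necklace_def)
  have wne: "w \<noteq> []" using w by (simp add: primitive_def)
  show "v \<noteq> []" using assms w wne conj_length by fastforce
  show "set v \<subseteq> {0..<k}" using assms w conj_set by (fastforce simp: word_over_def)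
  show "neck_len N = length v" using w wne assms neck_len_conj conj_length by metis
  show "rotate i v \<in> N" using w assms conj_rotate by auto
  show "finite N" using w finite_conj by auto
  show "card N \<le> neck_len N" using w wne card_conj neck_len_conj by metis
  show "N \<noteq> {}" using assms by auto
qed

locale dbs =
  fixes k n :: nat and M :: "nat list set multiset"
  assumes dB: "deBruijn_set k n M" and n1: "n \<ge> 1" and k1: "k \<ge> 1"
begin

lemma neck: "N \<in># M \<Longrightarrow> is_necklace k N"
  using dB by (simp add: deBruijn_set_def)

lemma finN: "\<forall>N\<in>#M. finite N"
  using neck neck_ne by blast

lemma Mne: "M \<noteq> {#}"
  using dB k1 by (auto simp: deBruijn_set_def)

lemma lpos: "lM M > 0"
proof -
  have "finite (neck_len ` set_mset M)" by simp
  moreover have "0 \<notin> neck_len ` set_mset M"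
  proof
    assume "0 \<in> neck_len ` set_mset M"
    then obtain N where N: "N \<in># M" "neck_len N = 0" by auto
    then obtain v where "v \<in> N" using neck neck_ne by blast
    then show False using N neck neck_facts(1,3) by fastforce
  qed
  ultimately show ?thesis by (metis Lcm_0_iff gr0I lM_def)
qed

lemma vfacts:
  assumes "N \<in># M" "v \<in> N"
  shows "v \<noteq> []" "set v \<subseteq> {0..<k}" "length v dvd lM M" "rotate i v \<in> N"
    "lM M div length v \<ge> 1" "length (gM M v) = lM M" "cyc (gM M v) = cyc v"
proof -
  note F = neck_facts[OF neck[OF assms(1)] assms(2)]
  show v: "v \<noteq> []" by (rule F(1))
  show "set v \<subseteq> {0..<k}" by (rule F(2))
  have nl: "neck_len N = length v" by (rule F(3))
  have "neck_len N \<in> neck_len ` set_mset M" using assms by auto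
  then show d: "length v dvd lM M" unfolding lM_def nl[symmetric] by (rule dvd_Lcm)
  show "rotate i v \<in> N" by (rule F(4))
  show g: "lM M div length v \<ge> 1" using d lpos v by (auto elim!: dvdE)
  show "length (gM M v) = lM M" using d by (simp add: gM_def)
  show "cyc (gM M v) = cyc v" using v g by (auto simp: gM_def cyc_power_word)
qed

lemma Wfacts:
  assumes "w \<in> WM M"
  shows "length w = lM M" "w \<noteq> []" "set w \<subseteq> {0..<k}" "rotate i w \<in> WM M"
    "keyn n w \<in> An k n"
proof -
  obtain N v where Nv: "N \<in># M" "v \<in> N" "w = gM M v" using assms WM_iff finN by blast
  show l: "length w = lM M" using Nv vfacts by simp
  then show ne: "w \<noteq> []" using lpos by auto
  have "set w \<subseteq> set v" using Nv by (simp add: gM_def set_power_word)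
  then show s: "set w \<subseteq> {0..<k}" using Nv vfacts(2) by blast
  have "rotate i w = gM M (rotate i v)" using Nv by (simp add: gM_def rotate_power_word)
  then show "rotate i w \<in> WM M" using Nv vfacts(4) WM_iff finN by blast
  show "keyn n w \<in> An k n" using ne s cyc_in_set by (fastforce simp: keyn_def An_def)
qed

lemma key_surj: "keyn n ` WM M = An k n"
proof
  show "keyn n ` WM M \<subseteq> An k n" using Wfacts by auto
  show "An k n \<subseteq> keyn n ` WM M"
  proof
    fix u assume u: "u \<in> An k n"
    then have "length u = n \<and> word_over k u" by (simp add: An_def word_over_def)
    then obtain N v m where Nv: "N \<in># M" "v \<in> N" "u = take n (power_word v m)"
      "n \<le> m * length v"
      using dB unfolding deBruijn_set_def by metis
    have "u = keyn n v" using Nv take_power_word by simp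
    also have "\<dots> = keyn n (gM M v)" using Nv vfacts(7) by (simp add: keyn_def)
    finally show "u \<in> keyn n ` WM M" using Nv WM_iff finN by blast
  qed
qed

lemma finW: "finite (WM M)" by (simp add: WM_def)

lemma card_W: "card (WM M) = k ^ n" and key_inj: "inj_on (keyn n) (WM M)"
  and S_len: "length (sorted_list_of_multiset (wsM M)) = card (WM M)"
proof -
  have a: "k ^ n \<le> card (WM M)" using key_surj card_An finW card_image_le by metis
  have "size (wsM M) = (\<Sum>N\<in>#M. card N)" by (rule size_wsM)
  also have "\<dots> \<le> (\<Sum>N\<in>#M. neck_len N)"
    by (rule sum_mset_mono) (metis neck neck_facts(6) neck_ne ex_in_conv)
  also have "\<dots> = k ^ n" using dB by (simp add: deBruijn_set_def)
  finally have b: "size (wsM M) \<le> k ^ n" .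
  have c0: "card (WM M) \<le> length (sorted_list_of_multiset (wsM M))"
    unfolding WM_def by (metis card_length set_sorted_list_of_multiset)
  have c1: "length (sorted_list_of_multiset (wsM M)) = size (wsM M)"
    by (metis mset_sorted_list_of_multiset size_mset)
  have c: "card (WM M) \<le> size (wsM M)" using c0 c1 by simp
  show "card (WM M) = k ^ n" using a b c by simp
  show "inj_on (keyn n) (WM M)" using a b c key_surj card_An finW
    by (intro eq_card_imp_inj_on) auto
  show "length (sorted_list_of_multiset (wsM M)) = card (WM M)" using a b c c1 by simp
qed

end


lemma count_list_distinct: "distinct g \<Longrightarrow> a \<in> set g \<Longrightarrow> count_list g a = 1"
  by (induction g) (auto simp: count_list_0_iff)

lemma perm_G: "length g = k \<Longrightarrow> distinct g \<Longrightarrow> set g \<subseteq> {0..<k} \<Longrightarrow> g \<in> G_set k"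
proof -
  assume a: "length g = k" "distinct g" "set g \<subseteq> {0..<k}"
  have "card (set g) = card {0..<k}" using a distinct_card by fastforce
  then have "set g = {0..<k}" using a card_subset_eq by (metis finite_atLeastLessThan)
  then show ?thesis using a count_list_distinct[of g] by (auto simp: G_set_def)
qed

lemma G_perm: "g \<in> G_set k \<Longrightarrow> length g = k \<and> distinct g \<and> set g = {0..<k}"
proof -
  assume g: "g \<in> G_set k"
  then have l: "length g = k" and c: "\<forall>a<k. count_list g a = 1" by (auto simp: G_set_def)
  have sub: "{0..<k} \<subseteq> set g"
  proof
    fix x assume "x \<in> {0..<k}"
    then have "count_list g x \<noteq> 0" using c by simp
    then show "x \<in> set g" by (simp add: count_list_0_iff)
  qed
  have "k \<le> card (set g)" using card_mono[OF _ sub] by simp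
  moreover have "card (set g) \<le> length g" by (rule card_length)
  ultimately have cd: "card (set g) = length g" using l by simp
  then have d: "distinct g" by (rule card_distinct)
  have "set g = {0..<k}" using sub cd l by (metis card_atLeastLessThan card_subset_eq diff_zero List.finite_set)
  then show ?thesis using l d by simp
qed

context dbs begin

definition wof :: "nat list \<Rightarrow> nat list" where
  "wof q = the_inv_into (WM M) (keyn n) q"

lemma wof: "q \<in> An k n \<Longrightarrow> wof q \<in> WM M \<and> keyn n (wof q) = q"
  unfolding wof_def using key_inj key_surj
  by (metis f_the_inv_into_f the_inv_into_into subset_refl)

lemma wof_key: "w \<in> WM M \<Longrightarrow> wof (keyn n w) = w"
  unfolding wof_def using key_inj by (rule the_inv_into_f_f)

lemma rot_key: assumes w: "w \<in> WM M"
  shows "keyn n (rotate (lM M - 1) w) = last w # take (n - 1) (keyn n w)"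
proof (intro nth_equalityI)
  show "length (keyn n (rotate (lM M - 1) w)) = length (last w # take (n - 1) (keyn n w))"
    using n1 by (simp add: keyn_def)
  fix t assume t: "t < length (keyn n (rotate (lM M - 1) w))"
  then have t': "t < n" by (simp add: keyn_def)
  have ne: "w \<noteq> []" and l: "length w = lM M" using Wfacts w by auto
  have "keyn n (rotate (lM M - 1) w) ! t = cyc w (t + (lM M - 1))"
    using t' ne by (simp add: keyn_def cyc_rotate)
  also have "\<dots> = (last w # take (n - 1) (keyn n w)) ! t"
  proof (cases t)
    case 0
    then show ?thesis using ne l lpos by (simp add: cyc_def last_conv_nth)
  next
    case (Suc s)
    then have "t + (lM M - 1) = s + length w" using l lpos by simp
    then have "cyc w (t + (lM M - 1)) = cyc w s" by (simp add: cyc_add_len)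
    then show ?thesis using Suc t' by (simp add: keyn_def)
  qed
  finally show "keyn n (rotate (lM M - 1) w) ! t = (last w # take (n - 1) (keyn n w)) ! t" .
qed

lemma rot_back: "w \<in> WM M \<Longrightarrow> rotate 1 (rotate (lM M - 1) w) = w"
proof -
  assume w: "w \<in> WM M"
  then have l: "length w = lM M" using Wfacts by auto
  have "rotate 1 (rotate (lM M - 1) w) = rotate (lM M) w" using lpos by (simp add: rotate_rotate)
  then show ?thesis using l by simp
qed

lemma key_mono: assumes "w1 \<in> WM M" "w2 \<in> WM M" "w1 \<le> w2"
  shows "keyn n w1 \<le> keyn n w2"
proof (cases "w1 = w2")
  case True then show ?thesis by simp
next
  case False
  then have lt: "w1 < w2" using assms by simp
  have l: "length w1 = lM M" "length w2 = lM M" using assms Wfacts by auto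
  have e: "keyn n w = take n (w @ power_word w (n - 1))" if "length w = lM M" for w
  proof -
    have "n \<le> n * length w" using that lpos by simp
    then have "keyn n w = take n (power_word w n)" by (simp add: take_power_word)
    also have "power_word w n = w @ power_word w (n - 1)" using n1
      by (metis Suc_diff_le diff_Suc_1 power_word_Suc)
    finally show ?thesis .
  qed
  show ?thesis using e[OF l(1)] e[OF l(2)] lex_take_le[OF _ lt] l by simp
qed

lemma map_key_S: "map (keyn n) (sorted_list_of_multiset (wsM M)) = wl k n"
proof (rule sorted_distinct_set_unique)
  let ?S = "sorted_list_of_multiset (wsM M)"
  have setS: "set ?S = WM M" by (simp add: WM_def)
  have so: "sorted_wrt (\<le>) ?S" by simp
  show "sorted (map (keyn n) ?S)"
    unfolding sorted_wrt_map by (rule sorted_wrt_mono_rel[OF _ so]) (use setS key_mono in auto)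
  have "distinct ?S" using S_len setS by (metis card_distinct)
  then show "distinct (map (keyn n) ?S)" using key_inj setS by (simp add: distinct_map)
  show "sorted (wl k n)" "distinct (wl k n)" using sorted_wl strict_sorted_iff by blast+
  show "set (map (keyn n) ?S) = set (wl k n)" using setS key_surj set_wl by simp
qed

lemma BW_main: "BW M = concat (map (\<lambda>x. map (\<lambda>b. last (wof (x @ [b]))) [0..<k]) (wl k (n - 1)))"
proof -
  let ?S = "sorted_list_of_multiset (wsM M)"
  have "BW M = map last ?S" by (rule BW_eq)
  also have "\<dots> = map (\<lambda>w. last (wof (keyn n w))) ?S"
    by (intro map_cong refl) (simp add: WM_def wof_key)
  also have "\<dots> = map (\<lambda>q. last (wof q)) (map (keyn n) ?S)" by simp
  also have "\<dots> = map (\<lambda>q. last (wof q)) (wl k n)" by (simp add: map_key_S)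
  also have "wl k n = wl k (Suc (n - 1))" using n1 by simp
  finally show ?thesis by (simp add: map_concat comp_def)
qed

lemma block_G: assumes x: "x \<in> An k (n - 1)"
  shows "map (\<lambda>b. last (wof (x @ [b]))) [0..<k] \<in> G_set k"
proof (rule perm_G)
  show "length (map (\<lambda>b. last (wof (x @ [b]))) [0..<k]) = k" by simp
  have q: "x @ [b] \<in> An k n" if "b < k" for b using x that n1 by (auto simp: An_def)
  show "set (map (\<lambda>b. last (wof (x @ [b]))) [0..<k]) \<subseteq> {0..<k}"
  proof
    fix a assume "a \<in> set (map (\<lambda>b. last (wof (x @ [b]))) [0..<k])"
    then obtain b where b: "b < k" "a = last (wof (x @ [b]))" by auto
    have "wof (x @ [b]) \<in> WM M" using wof q b by blast
    then show "a \<in> {0..<k}" using b Wfacts(2,3) last_in_set by blast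
  qed
  show "distinct (map (\<lambda>b. last (wof (x @ [b]))) [0..<k])"
    unfolding distinct_map
  proof
    show "inj_on (\<lambda>b. last (wof (x @ [b]))) (set [0..<k])"
    proof (rule inj_onI)
      fix b1 b2 assume b: "b1 \<in> set [0..<k]" "b2 \<in> set [0..<k]"
        and e: "last (wof (x @ [b1])) = last (wof (x @ [b2]))"
      define w1 where "w1 = wof (x @ [b1])"
      define w2 where "w2 = wof (x @ [b2])"
      have w1: "w1 \<in> WM M" "keyn n w1 = x @ [b1]" using wof q b w1_def by auto
      have w2: "w2 \<in> WM M" "keyn n w2 = x @ [b2]" using wof q b w2_def by auto
      have lx: "length x = n - 1" using x by (simp add: An_def)
      have "keyn n (rotate (lM M - 1) w1) = keyn n (rotate (lM M - 1) w2)"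
        using rot_key[OF w1(1)] rot_key[OF w2(1)] w1 w2 e lx w1_def w2_def by simp
      then have "rotate (lM M - 1) w1 = rotate (lM M - 1) w2"
        using key_inj Wfacts(4) w1 w2 by (meson inj_onD)
      then have "w1 = w2" using rot_back w1 w2 by metis
      then show "b1 = b2" using w1 w2 by simp
    qed
  qed simp
qed

lemma BW_Gamma: "BW M \<in> Gamma k n"
  unfolding Gamma_def BW_main
  using block_G set_wl length_wl by (auto intro!: exI[of _ "map (\<lambda>x. map (\<lambda>b. last (wof (x @ [b]))) [0..<k]) (wl k (n - 1))"])

end


lemma nth_cyc: "t < length v \<Longrightarrow> v ! t = cyc v t"
  by (simp add: cyc_def)

locale cons =
  fixes k n :: nat and bs :: "nat list list"
  assumes n1: "n \<ge> 1" and k1: "k \<ge> 1" and len: "length bs = k ^ (n - 1)"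
    and bsG: "\<forall>g\<in>set bs. g \<in> G_set k"
begin

definition idx :: "nat list \<Rightarrow> nat" where
  "idx x = (THE j. j < length (wl k (n - 1)) \<and> wl k (n - 1) ! j = x)"

lemma distinct_wl: "distinct (wl k m)"
  using sorted_wl strict_sorted_iff by blast

lemma idx_nth: "j < length (wl k (n - 1)) \<Longrightarrow> idx (wl k (n - 1) ! j) = j"
  unfolding idx_def using distinct_wl by (auto simp: nth_eq_iff_index_eq)

lemma idx: "x \<in> An k (n - 1) \<Longrightarrow> idx x < k ^ (n - 1) \<and> wl k (n - 1) ! idx x = x"
proof -
  assume "x \<in> An k (n - 1)"
  then obtain j where j: "j < length (wl k (n - 1))" "wl k (n - 1) ! j = x"
    using set_wl by (metis in_set_conv_nth)
  then show ?thesis using idx_nth length_wl by metis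
qed

definition f :: "nat list \<Rightarrow> nat \<Rightarrow> nat" where
  "f x b = bs ! idx x ! b"

lemma f_props: assumes "x \<in> An k (n - 1)"
  shows "b < k \<Longrightarrow> f x b < k" and "b1 < k \<Longrightarrow> b2 < k \<Longrightarrow> f x b1 = f x b2 \<Longrightarrow> b1 = b2"
proof -
  have "bs ! idx x \<in> set bs" using idx[OF assms] len by simp
  then have g: "length (bs ! idx x) = k" "distinct (bs ! idx x)" "set (bs ! idx x) = {0..<k}"
    using bsG G_perm by blast+
  show "b < k \<Longrightarrow> f x b < k" using g unfolding f_def by (metis atLeastLessThan_iff nth_mem)
  show "b1 < k \<Longrightarrow> b2 < k \<Longrightarrow> f x b1 = f x b2 \<Longrightarrow> b1 = b2"
    using g unfolding f_def by (simp add: nth_eq_iff_index_eq)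
qed

definition tau :: "nat list \<Rightarrow> nat list" where
  "tau q = f (butlast q) (last q) # butlast q"

lemma An_dec: assumes q: "q \<in> An k n" shows "butlast q \<in> An k (n - 1) \<and> last q < k \<and> q \<noteq> []"
proof -
  have l: "length q = n" and s: "set q \<subseteq> {0..<k}" using q by (auto simp: An_def)
  have ne: "q \<noteq> []" using l n1 by auto
  have "set (butlast q) \<subseteq> {0..<k}" using s by (meson in_set_butlastD subset_iff)
  moreover have "last q < k" using ne s last_in_set by fastforce
  ultimately show ?thesis using l s ne by (auto simp: An_def)
qed

lemma tau_An: assumes q: "q \<in> An k n" shows "tau q \<in> An k n"
proof -
  have a: "butlast q \<in> An k (n - 1)" "last q < k" using An_dec[OF q] by auto
  have "f (butlast q) (last q) < k" by (rule f_props(1)[OF a])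
  then show ?thesis using a n1 by (auto simp: tau_def An_def)
qed

lemma tau_inj: "inj_on tau (An k n)"
proof (rule inj_onI)
  fix q1 q2 assume q: "q1 \<in> An k n" "q2 \<in> An k n" and e: "tau q1 = tau q2"
  then have b: "butlast q1 = butlast q2" by (simp add: tau_def)
  then have "f (butlast q1) (last q1) = f (butlast q1) (last q2)" using e by (simp add: tau_def)
  then have "last q1 = last q2" using f_props(2) An_dec q by blast
  then show "q1 = q2" using b An_dec[OF q(1)] An_dec[OF q(2)] append_butlast_last_id by metis
qed

lemma tau_surj: "tau ` An k n = An k n"
proof (rule card_subset_eq)
  show "finite (An k n)" by (rule finite_An)
  show "tau ` An k n \<subseteq> An k n" using tau_An by blast
  show "card (tau ` An k n) = card (An k n)" using tau_inj by (rule card_image)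
qed

definition sig :: "nat list \<Rightarrow> nat list" where
  "sig = the_inv_into (An k n) tau"

lemma sig_An: "q \<in> An k n \<Longrightarrow> sig q \<in> An k n"
  unfolding sig_def using tau_surj tau_inj by (metis the_inv_into_into subset_refl)

lemma tau_sig: "q \<in> An k n \<Longrightarrow> tau (sig q) = q"
  unfolding sig_def using tau_surj tau_inj by (metis f_the_inv_into_f)

lemma sig_tau: "q \<in> An k n \<Longrightarrow> sig (tau q) = q"
  unfolding sig_def using tau_inj by (rule the_inv_into_f_f)

lemma sig_inj: "x \<in> An k n \<Longrightarrow> y \<in> An k n \<Longrightarrow> sig x = sig y \<Longrightarrow> x = y"
  using tau_sig by metis

lemma sig_shift: assumes q: "q \<in> An k n" and j: "j + 1 < n"
  shows "sig q ! j = q ! (j + 1)"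
proof -
  have "q = tau (sig q)" using tau_sig q by simp
  then have "q ! (j + 1) = butlast (sig q) ! j" unfolding tau_def by (metis nth_Cons_Suc Suc_eq_plus1)
  also have "\<dots> = sig q ! j" using sig_An[OF q] j by (simp add: An_def nth_butlast)
  finally show ?thesis by simp
qed

lemma sigp_An: "q \<in> An k n \<Longrightarrow> (sig ^^ t) q \<in> An k n"
  by (induction t) (auto simp: sig_An)

lemma sigp_shift: "q \<in> An k n \<Longrightarrow> t + j < n \<Longrightarrow> (sig ^^ t) q ! j = q ! (t + j)"
proof (induction t arbitrary: j)
  case 0 then show ?case by simp
next
  case (Suc t)
  have "(sig ^^ Suc t) q ! j = sig ((sig ^^ t) q) ! j" by simp
  also have "\<dots> = (sig ^^ t) q ! (j + 1)" using Suc sigp_An by (intro sig_shift) auto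
  also have "\<dots> = q ! (Suc t + j)" using Suc by simp
  finally show ?case .
qed

lemma taup_sigp: "q \<in> An k n \<Longrightarrow> (tau ^^ i) ((sig ^^ (i + m)) q) = (sig ^^ m) q"
proof (induction i)
  case 0 then show ?case by simp
next
  case (Suc i)
  have "(sig ^^ (Suc i + m)) q = sig ((sig ^^ (i + m)) q)" by simp
  then have "(tau ^^ Suc i) ((sig ^^ (Suc i + m)) q) = (tau ^^ i) (tau (sig ((sig ^^ (i + m)) q)))"
    by (simp only: funpow_Suc_right comp_apply)
  also have "\<dots> = (tau ^^ i) ((sig ^^ (i + m)) q)" using Suc sigp_An tau_sig by simp
  finally show ?case using Suc by simp
qed

lemma sigp_cancel: "q \<in> An k n \<Longrightarrow> i \<le> j \<Longrightarrow> (sig ^^ i) q = (sig ^^ j) q \<Longrightarrow> (sig ^^ (j - i)) q = q"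
  using taup_sigp[of q i 0] taup_sigp[of q i "j - i"] by simp

lemma period_ex: assumes q: "q \<in> An k n" shows "\<exists>p>0. (sig ^^ p) q = q"
proof -
  let ?h = "\<lambda>i. (sig ^^ i) q"
  have "?h ` {..card (An k n)} \<subseteq> An k n" using sigp_An q by auto
  then have "card (?h ` {..card (An k n)}) \<le> card (An k n)" using finite_An card_mono by blast
  then have "\<not> inj_on ?h {..card (An k n)}" using card_image by fastforce
  then obtain i j where ij: "i \<noteq> j" "?h i = ?h j" unfolding inj_on_def by blast
  show ?thesis
  proof (cases "i < j")
    case True then show ?thesis using sigp_cancel[OF q, of i j] ij by (intro exI[of _ "j - i"]) auto
  next
    case False then show ?thesis using sigp_cancel[OF q, of j i] ij by (intro exI[of _ "i - j"]) auto
  qed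
qed

definition per :: "nat list \<Rightarrow> nat" where
  "per q = (LEAST p. p > 0 \<and> (sig ^^ p) q = q)"

lemma per: "q \<in> An k n \<Longrightarrow> per q > 0 \<and> (sig ^^ per q) q = q"
  unfolding per_def by (rule LeastI_ex[OF period_ex])

lemma per_min: "0 < p \<Longrightarrow> p < per q \<Longrightarrow> (sig ^^ p) q \<noteq> q"
  unfolding per_def using not_less_Least by blast

lemma sigp_mod: "q \<in> An k n \<Longrightarrow> (sig ^^ (t mod per q)) q = (sig ^^ t) q"
  using per by (intro funpow_mod_eq) blast

lemma sigp_inj: assumes q: "q \<in> An k n" and ij: "i < per q" "j < per q"
  and e: "(sig ^^ i) q = (sig ^^ j) q" shows "i = j"
proof (rule ccontr)
  assume "i \<noteq> j"
  then consider "i < j" | "j < i" by linarith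
  then show False
  proof cases
    case 1 then show False using sigp_cancel[OF q, of i j] e per_min[of "j - i" q] ij by auto
  next
    case 2 then show False using sigp_cancel[OF q, of j i] e per_min[of "i - j" q] ij by auto
  qed
qed

lemma per_sig: assumes q: "q \<in> An k n" shows "per (sig q) = per q"
proof -
  have "((sig ^^ p) (sig q) = sig q) \<longleftrightarrow> ((sig ^^ p) q = q)" for p
  proof -
    have "(sig ^^ p) (sig q) = sig ((sig ^^ p) q)" by (simp add: funpow_swap1)
    moreover have "sig ((sig ^^ p) q) = sig q \<Longrightarrow> (sig ^^ p) q = q"
      by (rule sig_inj[OF sigp_An[OF q] q])
    ultimately show ?thesis by auto
  qed
  then show ?thesis unfolding per_def by simp
qed

definition cw :: "nat list \<Rightarrow> nat list" where
  "cw q = map (\<lambda>t. hd ((sig ^^ t) q)) [0..<per q]"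

lemma length_cw: "length (cw q) = per q" by (simp add: cw_def)

lemma cw_ne: "q \<in> An k n \<Longrightarrow> cw q \<noteq> []"
  using per[of q] by (simp add: cw_def)

lemma cyc_cw: assumes q: "q \<in> An k n" shows "cyc (cw q) t = hd ((sig ^^ t) q)"
proof -
  have "cyc (cw q) t = cw q ! (t mod per q)" by (simp add: cyc_def length_cw)
  also have "\<dots> = hd ((sig ^^ (t mod per q)) q)" using per[OF q] by (simp add: cw_def)
  also have "\<dots> = hd ((sig ^^ t) q)" using sigp_mod[OF q] by simp
  finally show ?thesis .
qed

lemma key_cw: assumes q: "q \<in> An k n" shows "keyn n (cw q) = q"
proof (rule nth_equalityI)
  show "length (keyn n (cw q)) = length q" using q by (simp add: keyn_def An_def)
  fix t assume "t < length (keyn n (cw q))"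
  then have t: "t < n" by (simp add: keyn_def)
  have ne: "(sig ^^ t) q \<noteq> []" using sigp_An[OF q, of t] n1 by (auto simp: An_def)
  have "keyn n (cw q) ! t = hd ((sig ^^ t) q)" using t cyc_cw[OF q] by (simp add: keyn_def)
  also have "\<dots> = (sig ^^ t) q ! 0" using ne by (simp add: hd_conv_nth)
  also have "\<dots> = q ! t" using sigp_shift[OF q, of t 0] t by simp
  finally show "keyn n (cw q) ! t = q ! t" .
qed

lemma rot1_cw: assumes q: "q \<in> An k n" shows "rotate 1 (cw q) = cw (sig q)"
proof (rule nth_equalityI)
  have p: "per (sig q) = per q" using per_sig q by simp
  show "length (rotate 1 (cw q)) = length (cw (sig q))" using p by (simp add: length_cw)
  fix t assume "t < length (rotate 1 (cw q))"
  then have t: "t < per q" by (simp add: length_cw)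
  have "rotate 1 (cw q) ! t = cyc (rotate 1 (cw q)) t"
    using t by (intro nth_cyc) (simp add: length_cw)
  also have "\<dots> = cyc (cw q) (t + 1)" using cw_ne[OF q] by (rule cyc_rotate)
  also have "\<dots> = hd ((sig ^^ t) (sig q))" using cyc_cw[OF q] by (simp add: funpow_Suc_right del: funpow.simps)
  also have "\<dots> = cw (sig q) ! t" using cyc_cw[OF sig_An[OF q]] nth_cyc[of t "cw (sig q)"] t p
    by (simp add: length_cw)
  finally show "rotate 1 (cw q) ! t = cw (sig q) ! t" .
qed

lemma rot_cw: "q \<in> An k n \<Longrightarrow> rotate i (cw q) = cw ((sig ^^ i) q)"
proof (induction i)
  case 0 then show ?case by simp
next
  case (Suc i)
  have "rotate (Suc i) (cw q) = rotate 1 (rotate i (cw q))" by (simp add: rotate_rotate)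
  also have "\<dots> = cw (sig ((sig ^^ i) q))" using Suc sigp_An rot1_cw by simp
  finally show ?case by simp
qed

end


context cons begin

lemma hd_sigp: "q \<in> An k n \<Longrightarrow> hd ((sig ^^ t) q) < k"
proof -
  assume q: "q \<in> An k n"
  have a: "(sig ^^ t) q \<in> An k n" by (rule sigp_An[OF q])
  then have "(sig ^^ t) q \<noteq> []" using n1 by (auto simp: An_def)
  then have "hd ((sig ^^ t) q) \<in> set ((sig ^^ t) q)" by simp
  then show ?thesis using a by (auto simp: An_def)
qed

lemma word_cw: "q \<in> An k n \<Longrightarrow> word_over k (cw q)"
  using hd_sigp by (auto simp: word_over_def cw_def)

lemma prim_cw: assumes q: "q \<in> An k n" shows "primitive (cw q)"
  unfolding primitive_def
proof (intro conjI)
  show ne: "cw q \<noteq> []" by (rule cw_ne[OF q])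
  show "\<not> (\<exists>u m. 2 \<le> m \<and> cw q = power_word u m)"
  proof
  assume "\<exists>u m. 2 \<le> m \<and> cw q = power_word u m"
  then obtain u m where um: "m \<ge> 2" "cw q = power_word u m" by blast
  have L: "m * length u = per q" using um length_cw[of q] by simp
  have p0: "per q > 0" using per[OF q] by simp
  then have u0: "length u > 0" using L by (cases "length u") auto
  have "2 * length u \<le> m * length u" using um(1) by simp
  then have lt: "length u < per q" using L u0 by linarith
  have "rotate (length u) (cw q) = power_word (rotate (length u) u) m"
    using um by (simp add: rotate_power_word)
  also have "rotate (length u) u = u" by simp
  finally have "cw ((sig ^^ length u) q) = cw q" using um rot_cw[OF q] by simp
  then have "(sig ^^ length u) q = q" using key_cw q sigp_An by metis
  then show False using per_min[OF u0 lt] by simp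
  qed
qed

definition Nq :: "nat list \<Rightarrow> nat list set" where
  "Nq q = conjugates (cw q)"

lemma Nq_elem: "q \<in> An k n \<Longrightarrow> v \<in> Nq q \<Longrightarrow> \<exists>i. v = cw ((sig ^^ i) q)"
  unfolding Nq_def conjugates_def using rot_cw by blast

lemma Nq_sub: "q \<in> An k n \<Longrightarrow> Nq q \<subseteq> cw ` An k n"
  using Nq_elem sigp_An by blast

lemma card_Nq: assumes q: "q \<in> An k n" shows "card (Nq q) = per q"
proof -
  have e: "Nq q = (\<lambda>i. rotate i (cw q)) ` {..<per q}"
    by (auto simp: Nq_def conjugates_def length_cw)
  have "inj_on (\<lambda>i. rotate i (cw q)) {..<per q}"
  proof (rule inj_onI)
    fix i j assume ij: "i \<in> {..<per q}" "j \<in> {..<per q}" "rotate i (cw q) = rotate j (cw q)"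
    then have "cw ((sig ^^ i) q) = cw ((sig ^^ j) q)" using rot_cw[OF q] by simp
    then have "(sig ^^ i) q = (sig ^^ j) q" using key_cw sigp_An q by metis
    then show "i = j" using sigp_inj[OF q] ij by simp
  qed
  then show ?thesis using e card_image by fastforce
qed

lemma neck_len_Nq: "q \<in> An k n \<Longrightarrow> neck_len (Nq q) = card (Nq q)"
  using card_Nq neck_len_conj cw_ne length_cw by (simp add: Nq_def)

definition M0 :: "nat list set multiset" where
  "M0 = mset_set (Nq ` An k n)"

lemma setM0: "set_mset M0 = Nq ` An k n"
  unfolding M0_def using finite_An by simp

lemma union_Nq: "\<Union> (Nq ` An k n) = cw ` An k n"
proof
  show "\<Union> (Nq ` An k n) \<subseteq> cw ` An k n"
  proof
    fix v assume "v \<in> \<Union> (Nq ` An k n)"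
    then obtain q where q: "q \<in> An k n" "v \<in> Nq q" by blast
    then show "v \<in> cw ` An k n" using Nq_sub[OF q(1)] by blast
  qed
  show "cw ` An k n \<subseteq> \<Union> (Nq ` An k n)"
  proof
    fix v assume "v \<in> cw ` An k n"
    then obtain q where q: "q \<in> An k n" "v = cw q" by blast
    then have "v \<in> Nq q" using conj_self[OF cw_ne[OF q(1)]] by (simp add: Nq_def)
    then show "v \<in> \<Union> (Nq ` An k n)" using q by blast
  qed
qed

lemma cw_inj: "inj_on cw (An k n)"
proof (rule inj_onI)
  fix x y assume "x \<in> An k n" "y \<in> An k n" "cw x = cw y"
  then show "x = y" using key_cw[of x] key_cw[of y] by metis
qed

lemma dB: "deBruijn_set k n M0"
  unfolding deBruijn_set_def
proof (intro conjI allI impI)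
  show "\<forall>N\<in>#M0. is_necklace k N"
  proof
    fix N assume "N \<in># M0"
    then obtain q where q: "q \<in> An k n" "N = Nq q" using setM0 by auto
    show "is_necklace k N" unfolding is_necklace_def Nq_def q(2)
      using prim_cw[OF q(1)] word_cw[OF q(1)] by blast
  qed
  have "(\<Sum>N\<in>#M0. neck_len N) = (\<Sum>N\<in>Nq ` An k n. neck_len N)"
    unfolding M0_def by (rule sum_unfold_sum_mset[symmetric])
  also have "\<dots> = (\<Sum>N\<in>Nq ` An k n. card N)"
    by (rule sum.cong) (auto simp: neck_len_Nq)
  also have "\<dots> = card (\<Union> (Nq ` An k n))"
  proof (rule card_Union_disjoint[symmetric])
    show "pairwise disjnt (Nq ` An k n)"
    proof (rule pairwiseI)
      fix A B assume AB: "A \<in> Nq ` An k n" "B \<in> Nq ` An k n" "A \<noteq> B"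
      show "disjnt A B"
      proof (rule ccontr)
        assume "\<not> disjnt A B"
        then obtain x where x: "x \<in> A" "x \<in> B" by (auto simp: disjnt_def)
        obtain a b where ab: "A = conjugates a" "B = conjugates b" using AB by (auto simp: Nq_def)
        have "A = conjugates x" using conj_conj[of x a] x(1) ab(1) by simp
        moreover have "B = conjugates x" using conj_conj[of x b] x(2) ab(2) by simp
        ultimately show False using AB by simp
      qed
    qed
    show "\<And>A. A \<in> Nq ` An k n \<Longrightarrow> finite A" unfolding Nq_def using finite_conj by blast
  qed
  also have "\<dots> = k ^ n" using union_Nq card_image[OF cw_inj] card_An by simp
  finally show "(\<Sum>N\<in>#M0. neck_len N) = k ^ n" .
  fix u :: "nat list" assume "length u = n \<and> word_over k u"
  then have u: "u \<in> An k n" by (simp add: An_def word_over_def)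
  have lu: "length u = n" using u by (simp add: An_def)
  have "n \<le> n * length (cw u)" using per[OF u] by (simp add: length_cw)
  then have "take (length u) (power_word (cw u) n) = keyn n (cw u)"
    unfolding lu by (rule take_power_word)
  then have "u = take (length u) (power_word (cw u) n) \<and> length u \<le> n * length (cw u)"
    using u key_cw per[OF u] by (auto simp: An_def length_cw)
  moreover have "Nq u \<in># M0" using setM0 u by simp
  moreover have "cw u \<in> Nq u" using conj_self cw_ne u by (simp add: Nq_def)
  ultimately show "\<exists>N\<in>#M0. \<exists>v\<in>N. \<exists>m. u = take (length u) (power_word v m) \<and> length u \<le> m * length v"
    by blast
qed

end


context cons begin

lemma BW_M0: "BW M0 = concat bs"
proof -
  interpret D: dbs k n M0 using dB n1 k1 by unfold_locales
  have rot: "keyn n (rotate 1 w) = sig (keyn n w)" if wW: "w \<in> WM M0" for w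
  proof -
    obtain N v where Nv: "N \<in># M0" "v \<in> N" "w = gM M0 v" using WM_iff D.finN wW by blast
    obtain q where q: "q \<in> An k n" "N = Nq q" using Nv setM0 by auto
    obtain i where i: "v = cw ((sig ^^ i) q)" using Nq_elem q Nv by blast
    define y where "y = (sig ^^ i) q"
    have y: "y \<in> An k n" using sigp_An q y_def by simp
    have "keyn n w = keyn n v" using Nv D.vfacts(7) by (simp add: keyn_def)
    also have "\<dots> = y" using i y key_cw y_def by simp
    finally have kw: "keyn n w = y" .
    have r: "rotate 1 w = gM M0 (rotate 1 v)" using Nv by (simp add: gM_def rotate_power_word)
    have rv: "rotate 1 v \<in> N" using D.vfacts(4) Nv by blast
    have "keyn n (rotate 1 w) = keyn n (rotate 1 v)"
      using r D.vfacts(7)[OF Nv(1) rv] by (simp add: keyn_def)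
    also have "rotate 1 v = cw (sig y)" using i y_def rot1_cw y by simp
    also have "keyn n (cw (sig y)) = sig y" using key_cw sig_An y by simp
    finally show ?thesis using kw by simp
  qed
  have lastw: "last (D.wof (x @ [b])) = f x b" if x: "x \<in> An k (n - 1)" and b: "b < k" for x b
  proof -
    have q: "x @ [b] \<in> An k n" using x b n1 by (auto simp: An_def)
    define w where "w = D.wof (x @ [b])"
    have w: "w \<in> WM M0" "keyn n w = x @ [b]" using D.wof q w_def by auto
    define y where "y = keyn n (rotate (lM M0 - 1) w)"
    have lx: "length x = n - 1" using x by (simp add: An_def)
    have y: "y = last w # x" using D.rot_key[OF w(1)] w(2) lx y_def by simp
    have yA: "y \<in> An k n" using D.Wfacts(4,5) w(1) y_def by blast
    have "sig y = keyn n (rotate 1 (rotate (lM M0 - 1) w))" using rot D.Wfacts(4) w(1) y_def by simp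
    also have "\<dots> = x @ [b]" using D.rot_back w by simp
    finally have "tau (sig y) = tau (x @ [b])" by simp
    then have "y = tau (x @ [b])" using tau_sig yA by simp
    then have "last w = f x b" using y by (simp add: tau_def)
    then show ?thesis using w_def by simp
  qed
  have blk: "map (\<lambda>b. last (D.wof (x @ [b]))) [0..<k] = bs ! idx x" if x: "x \<in> set (wl k (n - 1))" for x
  proof -
    have xA: "x \<in> An k (n - 1)" using x set_wl by simp
    have "bs ! idx x \<in> set bs" using idx[OF xA] len by simp
    then have lk: "length (bs ! idx x) = k" using bsG G_perm by blast
    have "map (\<lambda>b. last (D.wof (x @ [b]))) [0..<k] = map (\<lambda>b. bs ! idx x ! b) [0..<k]"
      using lastw[OF xA] by (simp add: f_def)
    also have "\<dots> = bs ! idx x" using lk map_nth[of "bs ! idx x"] by simp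
    finally show ?thesis .
  qed
  have m: "map (\<lambda>x. bs ! idx x) (wl k (n - 1)) = bs"
  proof (rule nth_equalityI)
    show "length (map (\<lambda>x. bs ! idx x) (wl k (n - 1))) = length bs" using len length_wl by simp
    fix j assume "j < length (map (\<lambda>x. bs ! idx x) (wl k (n - 1)))"
    then have j: "j < length (wl k (n - 1))" by simp
    then show "map (\<lambda>x. bs ! idx x) (wl k (n - 1)) ! j = bs ! j" using idx_nth by simp
  qed
  have "BW M0 = concat (map (\<lambda>x. map (\<lambda>b. last (D.wof (x @ [b]))) [0..<k]) (wl k (n - 1)))"
    by (rule D.BW_main)
  also have "\<dots> = concat (map (\<lambda>x. bs ! idx x) (wl k (n - 1)))"
    by (rule arg_cong[where f=concat], rule map_cong[OF refl], rule blk)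
  also have "\<dots> = concat bs" using m by simp
  finally show ?thesis .
qed

end

theorem theorem3p4:
  fixes k n :: nat
  assumes "k \<ge> 2" and "n \<ge> 1"
  shows "{BW M | M. deBruijn_set k n M} = Gamma k n"
proof
  show "{BW M | M. deBruijn_set k n M} \<subseteq> Gamma k n"
  proof
    fix x assume "x \<in> {BW M | M. deBruijn_set k n M}"
    then obtain M where M: "deBruijn_set k n M" "x = BW M" by blast
    interpret dbs k n M using M assms by unfold_locales auto
    show "x \<in> Gamma k n" using M BW_Gamma by simp
  qed
  show "Gamma k n \<subseteq> {BW M | M. deBruijn_set k n M}"
  proof
    fix x assume "x \<in> Gamma k n"
    then obtain bs where bs: "x = concat bs" "length bs = k ^ (n - 1)" "\<forall>w\<in>set bs. w \<in> G_set k"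
      by (auto simp: Gamma_def)
    interpret C: cons k n bs using bs assms by unfold_locales auto
    show "x \<in> {BW M | M. deBruijn_set k n M}" using C.dB C.BW_M0 bs by (metis (mono_tags, lifting) mem_Collect_eq)
  qed
qed


end
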